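(* Let $(\mathcal{L},[\,,\,])$ be a Lie algebra over $\mathbf{k}$ with basis $X=\{x_j:j\in J\}$, $J$ totally ordered, $k\in\mathbf{k}$ nonzero, and let $\hat A,\hat q,\hat x_j,R$ and the model monomials be as described below. Let $W$ be a $\mathbf{k}$-vector space with a basis $\{\mathring{w}_M\}$ indexed bijectively by the model monomials $M$. Then there exists a $\mathbf{k}$-linear map $\sigma:\hat A\to W$ with $\sigma(M)=\mathring{w}_M$ for every model monomial $M$ and $\sigma(R)=0$; equivalently $\sigma$ vanishes on every element $a\,(\widehat{[x,y]}-[\hat x,\hat y]_{6,k})\,b$ with $a,b\in\hat A$, $x,y\in X$, where $[\hat x,\hat y]_{6,k}=\hat x\hat y-\hat y\hat x-\hat x\hat y\hat q+\hat y\hat x\hat q+k\hat x\hat q\hat y-k\hat y\hat q\hat x$.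
   Context: Construction: $\tilde q\notin X$ a symbol, $V$ the vector space with basis $X\cup\{\tilde q\}$, $T(V)$ its tensor algebra, $I$ the two-sided ideal generated by $\tilde q\otimes\tilde q-\tilde q$ and all $\tilde q\otimes a\otimes\tilde q-\tilde q\otimes a$ ($a\in T(V)$), $\hat A=T(V)/I$, $\hat q=\tilde q+I$, $\hat 1=1+I$, $\hat x_j=x_j+I$, $x\mapsto\hat x$ the linear extension to $\mathcal{L}$; $R$ is the two-sided ideal of $\hat A$ generated by all $\widehat{[x,y]}-[\hat x,\hat y]_{6,k}$, $x,y\in\mathcal{L}$. Model monomials: (a) $\hat q\hat x_{j_1}\cdots\hat x_{j_m}$, $m\ge0$, $j_1\le\cdots\le j_m$; (b) $\hat x_{i_1}\cdots\hat x_{i_t}\hat x_{j_0}\hat q\hat x_{j_1}\cdots\hat x_{j_m}$, $t,m\ge0$, $i_1\le\cdots\le i_t$, $j_0\le j_1\le\cdots\le j_m$; (c) $\hat x_{j_1}\cdots\hat x_{j_m}$, $m\ge0$, $j_1\le\cdots\le j_m$ (empty product $=\hat 1$). *)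

theory Defs
  imports Main "HOL-Library.Poly_Mapping"
begin

(* Generators of V: the basis symbols x_j (Xg j) and the extra symbol q~ (Qt). *)
datatype 'j gen = Qt | Xg 'j

(* Tensor algebra T(V): finitely supported k-linear combinations of words in the generators. *)
type_synonym ('j, 'k) tens = "'j gen list \<Rightarrow>\<^sub>0 'k"

definition wd :: "'j gen list \<Rightarrow> ('j, 'k::comm_ring_1) tens" where
  "wd w = Poly_Mapping.single w 1"

definition scal :: "'k::comm_ring_1 \<Rightarrow> ('a \<Rightarrow>\<^sub>0 'k) \<Rightarrow> ('a \<Rightarrow>\<^sub>0 'k)" where
  "scal c p = Poly_Mapping.map (\<lambda>x. c * x) p"

definition tmul :: "('j, 'k::comm_ring_1) tens \<Rightarrow> ('j, 'k) tens \<Rightarrow> ('j, 'k) tens" where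
  "tmul p r = (\<Sum>u\<in>Poly_Mapping.keys p. \<Sum>v\<in>Poly_Mapping.keys r.
      Poly_Mapping.single (u @ v) (Poly_Mapping.lookup p u * Poly_Mapping.lookup r v))"

definition klinear :: "(('a \<Rightarrow>\<^sub>0 'k::comm_ring_1) \<Rightarrow> ('b \<Rightarrow>\<^sub>0 'k)) \<Rightarrow> bool" where
  "klinear f \<longleftrightarrow> (\<forall>p r. f (p + r) = f p + f r) \<and> (\<forall>c p. f (scal c p) = scal c (f p))"

(* Lie algebra L with basis {x_j}: elements are coordinate vectors 'j \<Rightarrow>\<^sub>0 'k,
   the bracket is the bilinear extension of the structure map c with c i j = [x_i, x_j]. *)
definition lbr :: "('j \<Rightarrow> 'j \<Rightarrow> ('j \<Rightarrow>\<^sub>0 'k::comm_ring_1)) \<Rightarrow> ('j \<Rightarrow>\<^sub>0 'k) \<Rightarrow> ('j \<Rightarrow>\<^sub>0 'k) \<Rightarrow> ('j \<Rightarrow>\<^sub>0 'k)" where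
  "lbr c u v = (\<Sum>i\<in>Poly_Mapping.keys u. \<Sum>j\<in>Poly_Mapping.keys v. scal (Poly_Mapping.lookup u i * Poly_Mapping.lookup v j) (c i j))"

definition is_lie_bracket :: "('j \<Rightarrow> 'j \<Rightarrow> ('j \<Rightarrow>\<^sub>0 'k::comm_ring_1)) \<Rightarrow> bool" where
  "is_lie_bracket c \<longleftrightarrow>
     (\<forall>x. lbr c x x = 0) \<and>
     (\<forall>x y z. lbr c x (lbr c y z) + lbr c y (lbr c z x) + lbr c z (lbr c x y) = 0)"

(* the linear map x \<mapsto> \<hat>x from L to T(V) (composed with the quotient map to \<hat>A) *)
definition hatL :: "('j \<Rightarrow>\<^sub>0 'k::comm_ring_1) \<Rightarrow> ('j, 'k) tens" where
  "hatL u = (\<Sum>j\<in>Poly_Mapping.keys u. scal (Poly_Mapping.lookup u j) (wd [Xg j]))"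

definition br6 :: "'k::comm_ring_1 \<Rightarrow> 'j \<Rightarrow> 'j \<Rightarrow> ('j, 'k) tens" where
  "br6 k i j = wd [Xg i, Xg j] - wd [Xg j, Xg i] - wd [Xg i, Xg j, Qt] + wd [Xg j, Xg i, Qt]
      + scal k (wd [Xg i, Qt, Xg j]) - scal k (wd [Xg j, Qt, Xg i])"

definition model_monomial :: "'j::linorder gen list \<Rightarrow> bool" where
  "model_monomial w \<longleftrightarrow>
     (\<exists>js. sorted js \<and> w = Qt # map Xg js) \<or>
     (\<exists>is j0 js. sorted is \<and> sorted (j0 # js) \<and> w = map Xg is @ [Xg j0, Qt] @ map Xg js) \<or>
     (\<exists>js. sorted js \<and> w = map Xg js)"

end

theory Submission
  imports Defs
begin

lemma lookup_scal [simp]: "Poly_Mapping.lookup (scal c p) x = c * Poly_Mapping.lookup p x"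
  unfolding scal_def by transfer (simp add: when_def)

lemma scal_add_right: "scal c (p + q) = scal c p + scal c q"
  by (rule poly_mapping_eqI) (simp add: lookup_add algebra_simps)
lemma scal_add_left: "scal (a + b) p = scal a p + scal b p"
  by (rule poly_mapping_eqI) (simp add: lookup_add algebra_simps)
lemma scal_diff_right: "scal c (p - q) = scal c p - scal c q"
  by (rule poly_mapping_eqI) (simp add: lookup_minus algebra_simps)
lemma scal_diff_left: "scal (a - b) p = scal a p - scal b p"
  by (rule poly_mapping_eqI) (simp add: lookup_minus algebra_simps)
lemma scal_uminus_right: "scal c (- p) = - scal c p"
  by (rule poly_mapping_eqI) (simp)
lemma scal_uminus_left: "scal (- c) p = - scal c p"
  by (rule poly_mapping_eqI) (simp)
lemma scal_scal [simp]: "scal a (scal b p) = scal (a * b) p"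
  by (rule poly_mapping_eqI) (simp add: algebra_simps)
lemma scal_one [simp]: "scal 1 p = p"
  by (rule poly_mapping_eqI) simp
lemma scal_zero_left [simp]: "scal 0 p = 0"
  by (rule poly_mapping_eqI) simp
lemma scal_zero_right [simp]: "scal c 0 = 0"
  by (rule poly_mapping_eqI) simp
lemma scal_sum: "scal c (sum f S) = (\<Sum>x\<in>S. scal c (f x))"
  by (rule poly_mapping_eqI) (simp add: lookup_sum sum_distrib_left)
lemma scal_single [simp]: "scal c (Poly_Mapping.single x a) = Poly_Mapping.single x (c * a)"
  by (rule poly_mapping_eqI) (simp add: lookup_single when_def)
lemma keys_scal: "Poly_Mapping.keys (scal c p) \<subseteq> Poly_Mapping.keys p"
  by (auto simp: in_keys_iff)

definition ext :: "('a \<Rightarrow> ('b \<Rightarrow>\<^sub>0 'k::comm_ring_1)) \<Rightarrow> ('a \<Rightarrow>\<^sub>0 'k) \<Rightarrow> ('b \<Rightarrow>\<^sub>0 'k)" where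
  "ext f v = (\<Sum>a\<in>Poly_Mapping.keys v. scal (Poly_Mapping.lookup v a) (f a))"

lemma ext_superset:
  assumes "finite S" "Poly_Mapping.keys v \<subseteq> S"
  shows "ext f v = (\<Sum>a\<in>S. scal (Poly_Mapping.lookup v a) (f a))"
  unfolding ext_def
  by (rule sum.mono_neutral_left) (use assms in \<open>auto simp: in_keys_iff\<close>)

lemma ext_add: "ext f (v + w) = ext f v + ext f w"
proof -
  let ?S = "Poly_Mapping.keys v \<union> Poly_Mapping.keys w"
  have "ext f (v + w) = (\<Sum>a\<in>?S. scal (Poly_Mapping.lookup (v+w) a) (f a))"
    by (rule ext_superset) (auto simp: keys_add)
  also have "\<dots> = (\<Sum>a\<in>?S. scal (Poly_Mapping.lookup v a) (f a)) + (\<Sum>a\<in>?S. scal (Poly_Mapping.lookup w a) (f a))"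
    by (simp add: lookup_add scal_add_left sum.distrib)
  also have "\<dots> = ext f v + ext f w"
    by (simp add: ext_superset[symmetric])
  finally show ?thesis .
qed

lemma ext_scal: "ext f (scal c v) = scal c (ext f v)"
proof -
  have "ext f (scal c v) = (\<Sum>a\<in>Poly_Mapping.keys v. scal (Poly_Mapping.lookup (scal c v) a) (f a))"
    by (rule ext_superset) (auto simp: keys_scal[THEN subsetD])
  then show ?thesis by (simp add: ext_def scal_sum)
qed

lemma ext_zero [simp]: "ext f 0 = 0"
  by (simp add: ext_def)

lemma ext_single [simp]: "ext f (Poly_Mapping.single a c) = scal c (f a)"
  by (cases "c = 0") (simp_all add: ext_def)

lemma klinearI: "(\<And>p r. f (p + r) = f p + f r) \<Longrightarrow> (\<And>c p. f (scal c p) = scal c (f p)) \<Longrightarrow> klinear f"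
  by (simp add: klinear_def)

lemma klinear_add: "klinear f \<Longrightarrow> f (p + r) = f p + f r"
  by (simp add: klinear_def)
lemma klinear_scal: "klinear f \<Longrightarrow> f (scal c p) = scal c (f p)"
  by (simp add: klinear_def)
lemma klinear_zero: "klinear f \<Longrightarrow> f 0 = 0"
  using klinear_scal[of f 0 0] by simp
lemma klinear_uminus: assumes "klinear f" shows "f (- p) = - f p"
proof -
  have "f (- p) + f p = f (- p + p)" by (rule klinear_add[OF assms, symmetric])
  also have "\<dots> = 0" by (simp add: klinear_zero[OF assms])
  finally show ?thesis by (simp add: eq_neg_iff_add_eq_0)
qed
lemma klinear_diff: assumes "klinear f" shows "f (p - r) = f p - f r"
proof -
  have "f (p - r) = f (p + - r)" by simp
  also have "\<dots> = f p + f (- r)" by (rule klinear_add[OF assms])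
  finally show ?thesis by (simp add: klinear_uminus[OF assms])
qed
lemma klinear_sum: assumes "klinear f" shows "f (sum g S) = (\<Sum>x\<in>S. f (g x))"
  by (induction S rule: infinite_finite_induct) (simp_all add: klinear_zero[OF assms] klinear_add[OF assms])

lemma klinear_ext: "klinear (ext f)"
  by (rule klinearI) (simp_all add: ext_add ext_scal)

lemma ext_klinear: assumes "klinear F" shows "F (ext f v) = ext (\<lambda>a. F (f a)) v"
  by (simp add: ext_def klinear_sum[OF assms] klinear_scal[OF assms])

lemma ext_uminus: "ext f (- v) = - ext f v"
  by (rule klinear_uminus[OF klinear_ext])
lemma ext_diff: "ext f (v - w) = ext f v - ext f w"
  by (rule klinear_diff[OF klinear_ext])
lemma ext_sum: "ext f (sum g S) = (\<Sum>x\<in>S. ext f (g x))"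
  by (rule klinear_sum[OF klinear_ext])

lemma ext_cong: "(\<And>a. a \<in> Poly_Mapping.keys v \<Longrightarrow> f a = g a) \<Longrightarrow> ext f v = ext g v"
  by (simp add: ext_def)

lemma ext_cong2 [fundef_cong]: "v = w \<Longrightarrow> (\<And>a. a \<in> Poly_Mapping.keys w \<Longrightarrow> f a = g a) \<Longrightarrow> ext f v = ext g w"
  by (simp add: ext_def)

lemma ext_fadd: "ext (\<lambda>a. f a + g a) v = ext f v + ext g v"
  by (simp add: ext_def scal_add_right sum.distrib)
lemma ext_fdiff: "ext (\<lambda>a. f a - g a) v = ext f v - ext g v"
  by (simp add: ext_def scal_diff_right sum_subtractf)
lemma ext_fuminus: "ext (\<lambda>a. - f a) v = - ext f v"
  by (simp add: ext_def scal_uminus_right sum_negf)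
lemma ext_fscal: "ext (\<lambda>a. scal c (f a)) v = scal c (ext f v)"
  by (simp add: ext_def scal_sum mult.commute)
lemma ext_fzero [simp]: "ext (\<lambda>a. 0) v = 0"
  by (simp add: ext_def)
lemma ext_fsum: "ext (\<lambda>a. sum (\<lambda>i. f i a) S) v = (\<Sum>i\<in>S. ext (f i) v)"
  by (induction S rule: infinite_finite_induct) (auto simp: ext_fadd)

lemma ext_ext: "ext f (ext g v) = ext (\<lambda>a. ext f (g a)) v"
  by (rule ext_klinear[OF klinear_ext])

lemma ext_id: "ext (\<lambda>a. Poly_Mapping.single a 1) v = v"
proof (rule poly_mapping_eqI)
  fix x
  show "Poly_Mapping.lookup (ext (\<lambda>a. Poly_Mapping.single a 1) v) x = Poly_Mapping.lookup v x"
    unfolding ext_def lookup_sum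
    by (cases "x \<in> Poly_Mapping.keys v")
       (auto simp: lookup_single when_def in_keys_iff sum.delta cong: sum.cong)
qed

lemma ext_swap: "ext (\<lambda>a. ext (\<lambda>b. F a b) w) v = ext (\<lambda>b. ext (\<lambda>a. F a b) v) w"
  unfolding ext_def scal_sum
  by (subst sum.swap) (simp add: mult.commute)

lemma keys_sum_sub: "Poly_Mapping.keys (sum f S) \<subseteq> (\<Union>x\<in>S. Poly_Mapping.keys (f x))"
proof (induction S rule: infinite_finite_induct)
  case (insert x F)
  have "Poly_Mapping.keys (sum f (insert x F)) = Poly_Mapping.keys (f x + sum f F)" using insert by simp
  also have "\<dots> \<subseteq> Poly_Mapping.keys (f x) \<union> Poly_Mapping.keys (sum f F)" by (rule keys_add)
  also have "\<dots> \<subseteq> Poly_Mapping.keys (f x) \<union> (\<Union>y\<in>F. Poly_Mapping.keys (f y))"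
    using insert.IH by (rule Un_mono[OF order_refl])
  also have "\<dots> = (\<Union>y\<in>insert x F. Poly_Mapping.keys (f y))" by simp
  finally show ?case .
qed simp_all

lemma keys_ext: "Poly_Mapping.keys (ext f v) \<subseteq> (\<Union>a\<in>Poly_Mapping.keys v. Poly_Mapping.keys (f a))"
proof
  fix w assume "w \<in> Poly_Mapping.keys (ext f v)"
  then have "w \<in> Poly_Mapping.keys (\<Sum>a\<in>Poly_Mapping.keys v. scal (Poly_Mapping.lookup v a) (f a))"
    by (simp add: ext_def)
  then have "w \<in> (\<Union>a\<in>Poly_Mapping.keys v. Poly_Mapping.keys (scal (Poly_Mapping.lookup v a) (f a)))"
    by (rule subsetD[OF keys_sum_sub])
  then obtain a where "a \<in> Poly_Mapping.keys v" "w \<in> Poly_Mapping.keys (scal (Poly_Mapping.lookup v a) (f a))"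
    by (rule UN_E)
  then show "w \<in> (\<Union>a\<in>Poly_Mapping.keys v. Poly_Mapping.keys (f a))" using keys_scal[of "Poly_Mapping.lookup v a" "f a"] by blast
qed

lemma keys_diff_sub: "Poly_Mapping.keys (p - q) \<subseteq> Poly_Mapping.keys p \<union> Poly_Mapping.keys q"
  by (auto simp: in_keys_iff lookup_minus)

lemma klinear_comp: "klinear f \<Longrightarrow> klinear g \<Longrightarrow> klinear (\<lambda>x. f (g x))"
  by (simp add: klinear_def)

lemma klinear_eq_ext: "klinear F \<Longrightarrow> F v = ext (\<lambda>a. F (Poly_Mapping.single a 1)) v"
  using ext_klinear[of F "\<lambda>a. Poly_Mapping.single a 1" v] by (simp add: ext_id)


lemma lbr_ext: "lbr c u v = ext (\<lambda>i. ext (\<lambda>j. c i j) v) u"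
  by (simp add: lbr_def ext_def scal_sum)

lemma lbr_add1: "lbr c (x + y) z = lbr c x z + lbr c y z"
  by (simp add: lbr_ext ext_add)
lemma lbr_add2: "lbr c z (x + y) = lbr c z x + lbr c z y"
  by (simp add: lbr_ext ext_add ext_fadd)
lemma lbr_scal1: "lbr c (scal a x) z = scal a (lbr c x z)"
  by (simp add: lbr_ext ext_scal)
lemma lbr_scal2: "lbr c z (scal a x) = scal a (lbr c z x)"
  by (simp add: lbr_ext ext_scal ext_fscal)
lemma lbr_uminus1: "lbr c (- x) z = - lbr c x z"
  by (simp add: lbr_ext ext_uminus)
lemma lbr_uminus2: "lbr c z (- x) = - lbr c z x"
  by (simp add: lbr_ext ext_uminus ext_fuminus)
lemma lbr_single: "lbr (c::'j \<Rightarrow> 'j \<Rightarrow> ('j \<Rightarrow>\<^sub>0 'k::field)) (Poly_Mapping.single a 1) (Poly_Mapping.single b 1) = c a b"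
  by (simp add: lbr_ext)

lemma lbr_antisym:
  assumes "is_lie_bracket c"
  shows "lbr c x y = - lbr c y x"
proof -
  have "lbr c (x + y) (x + y) = 0" using assms by (simp add: is_lie_bracket_def)
  moreover have "lbr c x x = 0" "lbr c y y = 0" using assms by (simp_all add: is_lie_bracket_def)
  ultimately have "lbr c y x + lbr c x y = 0"
    by (simp add: lbr_add1 lbr_add2)
  then have "lbr c x y + lbr c y x = 0" by (simp add: add.commute)
  then show ?thesis by (simp add: eq_neg_iff_add_eq_0)
qed

lemma c_antisym:
  assumes "is_lie_bracket (c::'j \<Rightarrow> 'j \<Rightarrow> ('j \<Rightarrow>\<^sub>0 'k::field))"
  shows "c a b = - c b a"
  using lbr_antisym[OF assms, of "Poly_Mapping.single a 1" "Poly_Mapping.single b 1"]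
  by (simp add: lbr_single)

lemma c_diag:
  assumes "is_lie_bracket (c::'j \<Rightarrow> 'j \<Rightarrow> ('j \<Rightarrow>\<^sub>0 'k::field))"
  shows "c a a = 0"
  using assms unfolding is_lie_bracket_def
  by (metis lbr_single)

lemma jacobi3:
  assumes "is_lie_bracket c"
  shows "lbr c x (lbr c y z) + lbr c (lbr c y x) z + lbr c y (lbr c z x) = 0"
proof -
  have j: "lbr c x (lbr c y z) + lbr c y (lbr c z x) + lbr c z (lbr c x y) = 0"
    using assms by (simp add: is_lie_bracket_def)
  have "lbr c (lbr c y x) z = lbr c z (lbr c x y)"
    using lbr_antisym[OF assms, of "lbr c y x" z] lbr_antisym[OF assms, of y x]
    by (simp add: lbr_uminus2)
  then show ?thesis using j by (simp add: algebra_simps)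
qed

(* ---------- PBW representation ---------- *)

primrec Rf :: "nat \<Rightarrow> ('j::linorder \<Rightarrow> 'j \<Rightarrow> ('j \<Rightarrow>\<^sub>0 'k::field)) \<Rightarrow> 'j \<Rightarrow> 'j list \<Rightarrow> ('j list \<Rightarrow>\<^sub>0 'k)" where
  "Rf 0 c l s = Poly_Mapping.single (l#s) 1"
| "Rf (Suc n) c l s = (if sorted (l#s) then Poly_Mapping.single (l#s) 1 else
     (case s of [] \<Rightarrow> Poly_Mapping.single [l] 1
      | m#t \<Rightarrow> ext (\<lambda>w. if sorted (m#w) then Poly_Mapping.single (m#w) 1 else Rf n c m w) (Rf n c l t)
              + ext (\<lambda>\<nu>. Rf n c \<nu> t) (c l m)))"

lemma Rf_step: assumes "m < l" shows "Rf (Suc n) c l (m#t) =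
   ext (\<lambda>w. if sorted (m#w) then Poly_Mapping.single (m#w) 1 else Rf n c m w) (Rf n c l t)
              + ext (\<lambda>\<nu>. Rf n c \<nu> t) (c l m)"
proof -
  have "\<not> l \<le> m" using assms by (simp add: not_le)
  then have ns: "\<not> sorted (l#m#t)" by simp
  show ?thesis by (simp only: Rf.simps(2) if_not_P[OF ns] list.case)
qed

lemma Rf_sorted: "sorted (l#s) \<Longrightarrow> Rf (Suc n) c l s = Poly_Mapping.single (l#s) 1"
  by simp

declare Rf.simps(2)[simp del]

definition rho where "rho c l s = Rf (Suc (length s)) c l s"

lemma rho_A: "sorted (l#s) \<Longrightarrow> rho c l s = Poly_Mapping.single (l#s) 1"
  by (simp add: rho_def Rf_sorted)

definition Gx where
  "Gx c l m t = ext (\<lambda>w. if sorted (m#w) then Poly_Mapping.single (m#w) 1 else rho c m w) (rho c l t)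
              + ext (\<lambda>\<nu>. rho c \<nu> t) (c l m)"

definition goodkeys where
  "goodkeys l s p \<longleftrightarrow> (\<forall>w\<in>Poly_Mapping.keys p. sorted w \<and> length w \<le> Suc (length s) \<and>
        (length w = Suc (length s) \<longrightarrow> set w \<subseteq> insert l (set s)))"

lemma in_keys_ext:
  assumes "w \<in> Poly_Mapping.keys (ext f v)"
  obtains a where "a \<in> Poly_Mapping.keys v" "w \<in> Poly_Mapping.keys (f a)"
proof -
  have "w \<in> (\<Union>a\<in>Poly_Mapping.keys v. Poly_Mapping.keys (f a))" using keys_ext assms by (rule subsetD)
  then show ?thesis by (rule UN_E[OF _ that])
qed

lemma in_keys_add: "w \<in> Poly_Mapping.keys (p + q) \<Longrightarrow> w \<in> Poly_Mapping.keys p \<or> w \<in> Poly_Mapping.keys q"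
  by (auto simp: in_keys_iff lookup_add)

lemma goodkeysD:
  assumes "goodkeys l s p" "w \<in> Poly_Mapping.keys p"
  shows "sorted w" "length w \<le> Suc (length s)" "length w = Suc (length s) \<Longrightarrow> set w \<subseteq> insert l (set s)"
  using assms unfolding goodkeys_def by blast+

lemma SB:
  fixes c :: "'j::linorder \<Rightarrow> 'j \<Rightarrow> ('j \<Rightarrow>\<^sub>0 'k::field)"
  shows "sorted s \<Longrightarrow> (\<forall>n. length s < n \<longrightarrow> Rf n c l s = rho c l s) \<and> goodkeys l s (rho c l s)"
proof (induction "length s" arbitrary: s l rule: less_induct)
  case less
  show ?case
  proof (cases "sorted (l#s)")
    case True
    have "\<forall>n. length s < n \<longrightarrow> Rf n c l s = rho c l s"
    proof (intro allI impI)
      fix n assume "length s < n"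
      then obtain n' where "n = Suc n'" by (cases n) auto
      then show "Rf n c l s = rho c l s" using True by (simp add: rho_def Rf_sorted)
    qed
    moreover have "goodkeys l s (rho c l s)"
      using True by (simp add: rho_A goodkeys_def)
    ultimately show ?thesis by blast
  next
    case False
    then obtain m t where s: "s = m#t" by (cases s) auto
    have lm: "m < l" using False less.prems s by auto
    have st: "sorted t" using less.prems s by simp
    have mt: "\<forall>x\<in>set t. m \<le> x" using less.prems s by simp
    have IH: "\<And>s' l'. length s' < length s \<Longrightarrow> sorted s' \<Longrightarrow>
        (\<forall>n. length s' < n \<longrightarrow> Rf n c l' s' = rho c l' s') \<and> goodkeys l' s' (rho c l' s')"
      using less.hyps by blast
    have IHt: "(\<forall>n. length t < n \<longrightarrow> Rf n c l' t = rho c l' t) \<and> goodkeys l' t (rho c l' t)" for l'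
      using IH[of t l'] s st by simp
    have short: "length w \<le> length t" if w: "w \<in> Poly_Mapping.keys (rho c l t)" "\<not> sorted (m#w)" for w
    proof (rule ccontr)
      assume "\<not> length w \<le> length t"
      have g: "goodkeys l t (rho c l t)" using IHt[of l] by blast
      have "length w = Suc (length t)" using goodkeysD(2)[OF g w(1)] \<open>\<not> length w \<le> length t\<close> by simp
      then have "sorted w" "set w \<subseteq> insert l (set t)" using goodkeysD[OF g w(1)] by blast+
      then have "sorted (m#w)" using lm mt by auto
      with w show False by simp
    qed
    have sw: "sorted w" if "w \<in> Poly_Mapping.keys (rho c l t)" for w
      using IHt[of l] that goodkeysD(1) by blast
    have F: "Rf (Suc n) c l s = Gx c l m t" if "length t < n" for n
    proof -
      have "Rf (Suc n) c l s = ext (\<lambda>w. if sorted (m#w) then Poly_Mapping.single (m#w) 1 else Rf n c m w) (Rf n c l t)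
              + ext (\<lambda>\<nu>. Rf n c \<nu> t) (c l m)"
        using Rf_step[OF lm] s by simp
      also have "Rf n c l t = rho c l t" using IHt that by blast
      also have "(\<lambda>\<nu>. Rf n c \<nu> t) = (\<lambda>\<nu>. rho c \<nu> t)" using IHt that by blast
      also have "ext (\<lambda>w. if sorted (m#w) then Poly_Mapping.single (m#w) 1 else Rf n c m w) (rho c l t)
               = ext (\<lambda>w. if sorted (m#w) then Poly_Mapping.single (m#w) 1 else rho c m w) (rho c l t)"
      proof (rule ext_cong)
        fix w assume w: "w \<in> Poly_Mapping.keys (rho c l t)"
        show "(if sorted (m#w) then Poly_Mapping.single (m#w) 1 else Rf n c m w) =
              (if sorted (m#w) then Poly_Mapping.single (m#w) 1 else rho c m w)"
        proof (cases "sorted (m#w)")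
          case False
          then have "length w \<le> length t" using short w by blast
          then have "length w < length s" "length w < n" using s that by simp_all
          then have "Rf n c m w = rho c m w" using IH[of w m] sw[OF w] by blast
          then show ?thesis by simp
        qed simp
      qed
      finally show ?thesis by (simp add: Gx_def)
    qed
    have stab: "\<forall>n. length s < n \<longrightarrow> Rf n c l s = rho c l s"
    proof (intro allI impI)
      fix n assume "length s < n"
      then obtain n' where n: "n = Suc n'" "length t < n'" using s by (cases n) auto
      have "rho c l s = Gx c l m t" unfolding rho_def using F[of "length s"] s by simp
      then show "Rf n c l s = rho c l s" using F[OF n(2)] n(1) by simp
    qed
    have rhoG: "rho c l s = Gx c l m t" unfolding rho_def using F[of "length s"] s by simp
    have gk: "goodkeys l s (rho c l s)"
      unfolding goodkeys_def
    proof
      fix w assume "w \<in> Poly_Mapping.keys (rho c l s)"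
      then have "w \<in> Poly_Mapping.keys (ext (\<lambda>w. if sorted (m#w) then Poly_Mapping.single (m#w) 1 else rho c m w) (rho c l t) + ext (\<lambda>\<nu>. rho c \<nu> t) (c l m))"
        using rhoG by (simp add: Gx_def)
      then have "w \<in> Poly_Mapping.keys (ext (\<lambda>w. if sorted (m#w) then Poly_Mapping.single (m#w) 1 else rho c m w) (rho c l t))
               \<or> w \<in> Poly_Mapping.keys (ext (\<lambda>\<nu>. rho c \<nu> t) (c l m))"
        by (rule in_keys_add)
      then show "sorted w \<and> length w \<le> Suc (length s) \<and> (length w = Suc (length s) \<longrightarrow> set w \<subseteq> insert l (set s))"
      proof
        assume "w \<in> Poly_Mapping.keys (ext (\<lambda>w. if sorted (m#w) then Poly_Mapping.single (m#w) 1 else rho c m w) (rho c l t))"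
        then obtain u where u: "u \<in> Poly_Mapping.keys (rho c l t)"
          and wu: "w \<in> Poly_Mapping.keys (if sorted (m#u) then Poly_Mapping.single (m#u) 1 else rho c m u)"
          by (rule in_keys_ext)
        have gl: "goodkeys l t (rho c l t)" using IHt[of l] by blast
        have gu: "sorted u" "length u \<le> Suc (length t)" "length u = Suc (length t) \<longrightarrow> set u \<subseteq> insert l (set t)"
          using goodkeysD[OF gl u] by blast+
        show ?thesis
        proof (cases "sorted (m#u)")
          case True
          then have "w = m#u" using wu by simp
          then show ?thesis using True gu s by auto
        next
          case False
          then have lu: "length u \<le> length t" using short u by blast
          have "length u < length s" using lu s by simp
          then have gm: "goodkeys m u (rho c m u)" using IH[of u m] gu(1) by blast
          have wk: "w \<in> Poly_Mapping.keys (rho c m u)" using wu by (simp only: if_not_P[OF False])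
          have "length w \<le> Suc (length u)" by (rule goodkeysD(2)[OF gm wk])
          then have "length w \<le> length s" using lu s by simp
          then show ?thesis using goodkeysD(1)[OF gm wk] by simp
        qed
      next
        assume "w \<in> Poly_Mapping.keys (ext (\<lambda>\<nu>. rho c \<nu> t) (c l m))"
        then obtain \<nu> where wn: "w \<in> Poly_Mapping.keys (rho c \<nu> t)" by (rule in_keys_ext)
        have gn: "goodkeys \<nu> t (rho c \<nu> t)" using IHt[of \<nu>] by blast
        have "length w \<le> Suc (length t)" by (rule goodkeysD(2)[OF gn wn])
        then have "length w \<le> length s" using s by simp
        then show ?thesis using goodkeysD(1)[OF gn wn] by simp
      qed
    qed
    show ?thesis using stab gk by blast
  qed
qed

lemma rho_goodkeys: "sorted s \<Longrightarrow> goodkeys l s (rho c l s)"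
  using SB by blast

lemma rho_sorted_keys: "sorted s \<Longrightarrow> w \<in> Poly_Mapping.keys (rho c l s) \<Longrightarrow> sorted w"
  using rho_goodkeys by (fastforce simp: goodkeys_def)

lemma rho_unfold:
  assumes "sorted (m#t)" "m < l"
  shows "rho c l (m#t) = Gx c l m t"
proof -
  have "Rf (Suc (Suc (length t))) c l (m#t) = Gx c l m t"
  proof -
    have st: "sorted t" using assms by simp
    have IHt: "(\<forall>n. length t < n \<longrightarrow> Rf n c l' t = rho c l' t) \<and> goodkeys l' t (rho c l' t)" for l'
      using SB[OF st] by blast
    have "Rf (Suc (Suc (length t))) c l (m#t) = ext (\<lambda>w. if sorted (m#w) then Poly_Mapping.single (m#w) 1 else Rf (Suc (length t)) c m w) (rho c l t)
              + ext (\<lambda>\<nu>. rho c \<nu> t) (c l m)"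
      unfolding Rf_step[OF assms(2)] by (simp only: rho_def)
    also have "ext (\<lambda>w. if sorted (m#w) then Poly_Mapping.single (m#w) 1 else Rf (Suc (length t)) c m w) (rho c l t)
         = ext (\<lambda>w. if sorted (m#w) then Poly_Mapping.single (m#w) 1 else rho c m w) (rho c l t)"
    proof (rule ext_cong)
      fix w assume w: "w \<in> Poly_Mapping.keys (rho c l t)"
      show "(if sorted (m#w) then Poly_Mapping.single (m#w) 1 else Rf (Suc (length t)) c m w) =
            (if sorted (m#w) then Poly_Mapping.single (m#w) 1 else rho c m w)"
      proof (cases "sorted (m#w)")
        case False
        have gw: "sorted w" "length w = Suc (length t) \<longrightarrow> set w \<subseteq> insert l (set t)" "length w \<le> Suc (length t)"
          using IHt[of l] w by (auto simp: goodkeys_def)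
        have "length w \<le> length t"
        proof (rule ccontr)
          assume "\<not> length w \<le> length t"
          then have "set w \<subseteq> insert l (set t)" using gw by auto
          then have "sorted (m#w)" using assms gw(1) by auto
          with False show False by simp
        qed
        then have "Rf (Suc (length t)) c m w = rho c m w" using SB[OF gw(1), where c=c and l=m] by simp
        then show ?thesis by simp
      qed simp
    qed
    finally show ?thesis by (simp add: Gx_def)
  qed
  then show ?thesis by (simp only: rho_def length_Cons)
qed


definition rhot where "rhot c l v = ext (\<lambda>s. if sorted s then rho c l s else 0) v"
definition rhoL where "rhoL c x v = ext (\<lambda>\<nu>. rhot c \<nu> v) x"

lemma klinear_rhot: "klinear (rhot c l)"
  unfolding rhot_def[abs_def] by (rule klinear_ext)

lemma klinear_rhoL: "klinear (rhoL c x)"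
  by (rule klinearI) (simp_all add: rhoL_def klinear_add[OF klinear_rhot] klinear_scal[OF klinear_rhot] ext_fadd ext_fscal)

lemma rhot_single: "rhot c l (Poly_Mapping.single s 1) = (if sorted s then rho c l s else 0)"
  by (simp add: rhot_def)

lemma rhoL_single: "rhoL (c::'j::linorder \<Rightarrow> 'j \<Rightarrow> ('j \<Rightarrow>\<^sub>0 'k::field)) (Poly_Mapping.single a 1) v = rhot c a v"
  by (simp add: rhoL_def)

lemma rhoL_add1: "rhoL c (x + y) v = rhoL c x v + rhoL c y v"
  by (simp add: rhoL_def ext_add)
lemma rhoL_scal1: "rhoL c (scal a x) v = scal a (rhoL c x v)"
  by (simp add: rhoL_def ext_scal)
lemma rhoL_uminus1: "rhoL c (- x) v = - rhoL c x v"
  by (simp add: rhoL_def ext_uminus)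
lemma rhoL_diff1: "rhoL c (x - y) v = rhoL c x v - rhoL c y v"
  by (simp add: rhoL_def ext_diff)
lemma rhoL_zero1 [simp]: "rhoL c 0 v = 0"
  by (simp add: rhoL_def)

lemma keys_rhot_sorted: "w \<in> Poly_Mapping.keys (rhot c l v) \<Longrightarrow> sorted w"
proof -
  assume "w \<in> Poly_Mapping.keys (rhot c l v)"
  then obtain s where "s \<in> Poly_Mapping.keys v" and ws: "w \<in> Poly_Mapping.keys (if sorted s then rho c l s else 0)"
    unfolding rhot_def by (rule in_keys_ext)
  show "sorted w"
  proof (cases "sorted s")
    case True then show ?thesis using ws rho_sorted_keys[OF True] by simp
  next
    case False then show ?thesis using ws by simp
  qed
qed

lemma eq_on_keys:
  assumes "klinear F" "klinear G" "\<And>w. w \<in> Poly_Mapping.keys v \<Longrightarrow> F (Poly_Mapping.single w 1) = G (Poly_Mapping.single w 1)"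
  shows "F v = G v"
  using klinear_eq_ext[OF assms(1), of v] klinear_eq_ext[OF assms(2), of v] ext_cong[of v, OF assms(3)]
  by simp

lemma klinear_fdiff: "klinear F \<Longrightarrow> klinear G \<Longrightarrow> klinear (\<lambda>x. F x - G x)"
  by (simp add: klinear_def scal_diff_right algebra_simps)

definition commB where
  "commB c v \<longleftrightarrow> (\<forall>a b. rhot c a (rhot c b v) - rhot c b (rhot c a v) = rhoL c (c a b) v)"
definition commP where
  "commP c v \<longleftrightarrow> (\<forall>x y. rhoL c x (rhoL c y v) - rhoL c y (rhoL c x v) = rhoL c (lbr c x y) v)"

lemma klinear_commop: "klinear (\<lambda>v. rhot c a (rhot c b v) - rhot c b (rhot c a v))"
  by (rule klinear_fdiff; rule klinear_comp[OF klinear_rhot klinear_rhot])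

lemma commB_keys:
  assumes "\<And>w. w \<in> Poly_Mapping.keys v \<Longrightarrow> commB c (Poly_Mapping.single w 1)"
  shows "commB c v"
  unfolding commB_def
proof (intro allI)
  fix a b
  show "rhot c a (rhot c b v) - rhot c b (rhot c a v) = rhoL c (c a b) v"
    by (rule eq_on_keys[OF klinear_commop klinear_rhoL]) (use assms in \<open>simp add: commB_def\<close>)
qed

lemma commB_unsorted: "\<not> sorted w \<Longrightarrow> commB c (Poly_Mapping.single w 1)"
  by (simp add: commB_def rhot_single rhoL_def klinear_zero[OF klinear_rhot])

lemma commB_commP:
  assumes "commB c v"
  shows "commP c v"
  unfolding commP_def
proof (intro allI)
  fix x y
  have e1: "rhoL c x (rhoL c y v) = ext (\<lambda>a. ext (\<lambda>b. rhot c a (rhot c b v)) y) x"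
    unfolding rhoL_def by (intro ext_cong ext_klinear[OF klinear_rhot])
  have "rhoL c y (rhoL c x v) = ext (\<lambda>b. ext (\<lambda>a. rhot c b (rhot c a v)) x) y"
    unfolding rhoL_def by (intro ext_cong ext_klinear[OF klinear_rhot])
  also have "\<dots> = ext (\<lambda>a. ext (\<lambda>b. rhot c b (rhot c a v)) y) x"
    by (rule ext_swap[symmetric])
  finally have e2: "rhoL c y (rhoL c x v) = ext (\<lambda>a. ext (\<lambda>b. rhot c b (rhot c a v)) y) x" .
  have "rhoL c (lbr c x y) v = ext (\<lambda>\<nu>. rhot c \<nu> v) (ext (\<lambda>i. ext (\<lambda>j. c i j) y) x)"
    by (simp only: rhoL_def lbr_ext)
  also have "\<dots> = ext (\<lambda>a. ext (\<lambda>\<nu>. rhot c \<nu> v) (ext (\<lambda>j. c a j) y)) x"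
    by (rule ext_ext)
  also have "\<dots> = ext (\<lambda>a. ext (\<lambda>b. ext (\<lambda>\<nu>. rhot c \<nu> v) (c a b)) y) x"
    by (intro ext_cong ext_ext)
  also have "\<dots> = ext (\<lambda>a. ext (\<lambda>b. rhoL c (c a b) v) y) x"
    by (simp only: rhoL_def)
  finally have e3: "rhoL c (lbr c x y) v = ext (\<lambda>a. ext (\<lambda>b. rhoL c (c a b) v) y) x" .
  have "ext (\<lambda>a. ext (\<lambda>b. rhot c a (rhot c b v)) y) x - ext (\<lambda>a. ext (\<lambda>b. rhot c b (rhot c a v)) y) x
      = ext (\<lambda>a. ext (\<lambda>b. rhot c a (rhot c b v)) y - ext (\<lambda>b. rhot c b (rhot c a v)) y) x"
    by (rule ext_fdiff[symmetric])
  also have "\<dots> = ext (\<lambda>a. ext (\<lambda>b. rhot c a (rhot c b v) - rhot c b (rhot c a v)) y) x"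
    by (simp only: ext_fdiff)
  also have "\<dots> = ext (\<lambda>a. ext (\<lambda>b. rhoL c (c a b) v) y) x"
    using assms unfolding commB_def by simp
  finally show "rhoL c x (rhoL c y v) - rhoL c y (rhoL c x v) = rhoL c (lbr c x y) v"
    unfolding e1 e2 e3 .
qed

lemma Dcomm:
  assumes "sorted (m#t)" "m < l"
  shows "rhot c l (rhot c m (Poly_Mapping.single t 1)) - rhot c m (rhot c l (Poly_Mapping.single t 1))
         = rhoL c (c l m) (Poly_Mapping.single t 1)"
proof -
  have st: "sorted t" using assms by simp
  have 1: "rhot c m (Poly_Mapping.single t 1) = Poly_Mapping.single (m#t) 1"
    using assms st by (simp add: rhot_single rho_A)
  have 2: "rhot c l (Poly_Mapping.single (m#t) 1) = Gx c l m t"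
    using assms by (simp add: rhot_single rho_unfold)
  have "rhot c m (rhot c l (Poly_Mapping.single t 1)) = rhot c m (rho c l t)"
    using st by (simp add: rhot_single)
  also have "\<dots> = ext (\<lambda>s. if sorted s then rho c m s else 0) (rho c l t)"
    by (simp only: rhot_def)
  also have "\<dots> = ext (\<lambda>w. if sorted (m#w) then Poly_Mapping.single (m#w) 1 else rho c m w) (rho c l t)"
  proof (rule ext_cong)
    fix w assume "w \<in> Poly_Mapping.keys (rho c l t)"
    then have sw: "sorted w" by (rule rho_sorted_keys[OF st])
    show "(if sorted w then rho c m w else 0) = (if sorted (m#w) then Poly_Mapping.single (m#w) 1 else rho c m w)"
    proof (cases "sorted (m#w)")
      case True then show ?thesis using sw by (simp add: rho_A)
    next
      case False then show ?thesis by (simp only: if_P[OF sw] if_not_P[OF False] if_False)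
    qed
  qed
  finally have 3: "rhot c m (rhot c l (Poly_Mapping.single t 1)) =
     ext (\<lambda>w. if sorted (m#w) then Poly_Mapping.single (m#w) 1 else rho c m w) (rho c l t)" .
  have 4: "rhoL c (c l m) (Poly_Mapping.single t 1) = ext (\<lambda>\<nu>. rho c \<nu> t) (c l m)"
    unfolding rhoL_def by (rule ext_cong) (simp add: rhot_single st)
  show ?thesis unfolding 1 2 3 4 Gx_def by simp
qed

lemma commB_main:
  assumes lie: "is_lie_bracket (c::'j::linorder \<Rightarrow> 'j \<Rightarrow> ('j \<Rightarrow>\<^sub>0 'k::field))"
  shows "sorted t \<Longrightarrow> commB c (Poly_Mapping.single t 1)"
proof (induction "length t" arbitrary: t rule: less_induct)
  case less
  have IHv: "commB c v" if "\<And>w. w \<in> Poly_Mapping.keys v \<Longrightarrow> sorted w \<Longrightarrow> length w < length t" for v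
  proof (rule commB_keys)
    fix w assume w: "w \<in> Poly_Mapping.keys v"
    show "commB c (Poly_Mapping.single w 1)"
    proof (cases "sorted w")
      case True then show ?thesis using less.hyps that[OF w] by blast
    qed (rule commB_unsorted)
  qed
  let ?z = "Poly_Mapping.single t 1"
  show ?case unfolding commB_def
  proof (intro allI)
    fix l m
    show "rhot c l (rhot c m ?z) - rhot c m (rhot c l ?z) = rhoL c (c l m) ?z"
    proof -
      consider (eq) "l = m" | (lo) "m < l" "sorted (m#t)" | (hi) "l < m" "sorted (l#t)"
        | (big) \<nu> \<Psi> where "t = \<nu>#\<Psi>" "\<nu> < l" "\<nu> < m"
      proof (cases "l = m")
        case True then show ?thesis using that(1) by blast
      next
        case ne: False
        show ?thesis
        proof (cases t)
          case Nil
          then show ?thesis using that(2,3) ne by (cases "m < l") auto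
        next
          case (Cons \<nu> \<Psi>)
          show ?thesis
          proof (cases "\<nu> < l \<and> \<nu> < m")
            case True then show ?thesis using that(4) Cons by blast
          next
            case False
            then have lmn: "l \<le> \<nu> \<or> m \<le> \<nu>" by (auto simp: not_less)
            have tn: "\<forall>x\<in>set t. \<nu> \<le> x" using less.prems Cons by simp
            show ?thesis
            proof (cases "m < l")
              case True
              have "m \<le> \<nu>" using lmn True by (meson less_imp_le order_trans)
              then have "\<forall>x\<in>set t. m \<le> x" using tn order_trans by blast
              then have "sorted (m#t)" using less.prems by simp
              then show ?thesis using that(2) True by blast
            next
              case False
              then have lm: "l < m" using ne by (simp add: not_less order.order_iff_strict)
              have "l \<le> \<nu>" using lmn lm by (meson less_imp_le order_trans)
              then have "\<forall>x\<in>set t. l \<le> x" using tn order_trans by blast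
              then have "sorted (l#t)" using less.prems by simp
              then show ?thesis using that(3) lm by blast
            qed
          qed
        qed
      qed
      then show ?thesis
      proof cases
        case eq
        then show ?thesis using c_diag[OF lie] by simp
      next
        case lo
        then show ?thesis using Dcomm by blast
      next
        case hi
        have "rhot c m (rhot c l ?z) - rhot c l (rhot c m ?z) = rhoL c (c m l) ?z"
          using Dcomm hi by blast
        then show ?thesis using c_antisym[OF lie, of m l] by (simp add: rhoL_uminus1 algebra_simps)
      next
        case big
        let ?w = "Poly_Mapping.single \<Psi> 1"
        have sP: "sorted (\<nu>#\<Psi>)" using less.prems big by simp
        then have sPsi: "sorted \<Psi>" by simp
        have cB: "commB c ?w" using less.hyps[of \<Psi>] big sPsi by simp
        have cP: "commP c ?w" using commB_commP[OF cB] .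
        have zt: "?z = rhot c \<nu> ?w" using big sP by (simp add: rhot_single rho_A)
        have key3: "rhot c a (rhot c \<nu> (rhot c b ?w)) - rhot c \<nu> (rhot c a (rhot c b ?w))
                    = rhoL c (c a \<nu>) (rhot c b ?w)" if "\<nu> < a" "\<nu> < b" for a b
        proof (rule eq_on_keys[where F="\<lambda>v. rhot c a (rhot c \<nu> v) - rhot c \<nu> (rhot c a v)"])
          show "klinear (\<lambda>v. rhot c a (rhot c \<nu> v) - rhot c \<nu> (rhot c a v))"
            by (rule klinear_commop)
          show "klinear (rhoL c (c a \<nu>))" by (rule klinear_rhoL)
        next
          fix w assume w: "w \<in> Poly_Mapping.keys (rhot c b ?w)"
          have gk: "goodkeys b \<Psi> (rho c b \<Psi>)" by (rule rho_goodkeys[OF sPsi])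
          have wk: "w \<in> Poly_Mapping.keys (rho c b \<Psi>)" using w sPsi by (simp add: rhot_single)
          have sw: "sorted w" "length w \<le> Suc (length \<Psi>)"
            "length w = Suc (length \<Psi>) \<longrightarrow> set w \<subseteq> insert b (set \<Psi>)"
            using gk wk by (auto simp: goodkeys_def)
          show "rhot c a (rhot c \<nu> (Poly_Mapping.single w 1)) - rhot c \<nu> (rhot c a (Poly_Mapping.single w 1))
                = rhoL c (c a \<nu>) (Poly_Mapping.single w 1)"
          proof (cases "sorted (\<nu>#w)")
            case True then show ?thesis using Dcomm that(1) by blast
          next
            case False
            have "length w < length t"
            proof (rule ccontr)
              assume "\<not> length w < length t"
              then have "length w = Suc (length \<Psi>)" using sw big by simp
              then have "set w \<subseteq> insert b (set \<Psi>)" using sw by simp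
              then have "sorted (\<nu>#w)" using sw(1) sP that(2) by auto
              with False show False by simp
            qed
            then have "commB c (Poly_Mapping.single w 1)" using less.hyps sw(1) by blast
            then show ?thesis by (simp add: commB_def)
          qed
        qed
        have step: "rhot c a (rhot c b ?z) = rhot c \<nu> (rhot c a (rhot c b ?w)) + rhoL c (c a \<nu>) (rhot c b ?w)
                    + rhot c a (rhoL c (c b \<nu>) ?w)" if "\<nu> < a" "\<nu> < b" for a b
        proof -
          have "rhot c b ?z = rhot c \<nu> (rhot c b ?w) + rhoL c (c b \<nu>) ?w"
            using cB unfolding zt commB_def by (metis diff_eq_eq add.commute)
          then have "rhot c a (rhot c b ?z) = rhot c a (rhot c \<nu> (rhot c b ?w)) + rhot c a (rhoL c (c b \<nu>) ?w)"
            by (simp add: klinear_add[OF klinear_rhot])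
          then show ?thesis using key3[OF that] by (metis diff_eq_eq add.commute)
        qed
        have L1: "rhot c l (rhot c m ?z) = rhot c \<nu> (rhot c l (rhot c m ?w)) + rhoL c (c l \<nu>) (rhot c m ?w)
                    + rhot c l (rhoL c (c m \<nu>) ?w)" using step big by blast
        have L2: "rhot c m (rhot c l ?z) = rhot c \<nu> (rhot c m (rhot c l ?w)) + rhoL c (c m \<nu>) (rhot c l ?w)
                    + rhot c m (rhoL c (c l \<nu>) ?w)" using step big by blast
        have G1: "rhot c \<nu> (rhot c l (rhot c m ?w)) - rhot c \<nu> (rhot c m (rhot c l ?w))
                 = rhot c \<nu> (rhoL c (c l m) ?w)"
          using cB unfolding commB_def by (simp add: klinear_diff[OF klinear_rhot, symmetric])
        define el where "el = (Poly_Mapping.single l 1 :: 'j \<Rightarrow>\<^sub>0 'k)"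
        define em where "em = (Poly_Mapping.single m 1 :: 'j \<Rightarrow>\<^sub>0 'k)"
        define en where "en = (Poly_Mapping.single \<nu> 1 :: 'j \<Rightarrow>\<^sub>0 'k)"
        have rl: "rhot c l = rhoL c el" "rhot c m = rhoL c em" "rhot c \<nu> = rhoL c en"
          by (auto simp: el_def em_def en_def rhoL_single)
        have cc: "c l m = lbr c el em" "c l \<nu> = lbr c el en" "c m \<nu> = lbr c em en"
          by (simp_all add: el_def em_def en_def lbr_single)
        have P1: "rhoL c en (rhoL c (c l m) ?w) - rhoL c (c l m) (rhoL c en ?w) = rhoL c (lbr c en (c l m)) ?w"
          using cP by (simp add: commP_def)
        have P2: "rhoL c (c l \<nu>) (rhoL c em ?w) - rhoL c em (rhoL c (c l \<nu>) ?w) = rhoL c (lbr c (c l \<nu>) em) ?w"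
          using cP by (simp add: commP_def)
        have P3: "rhoL c el (rhoL c (c m \<nu>) ?w) - rhoL c (c m \<nu>) (rhoL c el ?w) = rhoL c (lbr c el (c m \<nu>)) ?w"
          using cP by (simp add: commP_def)
        have J: "lbr c en (c l m) + lbr c (c l \<nu>) em + lbr c el (c m \<nu>) = 0"
          using jacobi3[OF lie, of en el em] cc by simp
        have J': "rhoL c (lbr c en (c l m)) ?w + rhoL c (lbr c (c l \<nu>) em) ?w + rhoL c (lbr c el (c m \<nu>)) ?w = 0"
          using J by (metis rhoL_add1 rhoL_zero1)
        have ztt: "rhoL c en ?w = ?z" using zt rl by simp
        show ?thesis
          using L1 L2 G1 P1 P2 P3 J' ztt unfolding rl
          by (simp add: algebra_simps)
      qed
    qed
  qed
qed

lemma commB_all: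
  assumes "is_lie_bracket (c::'j::linorder \<Rightarrow> 'j \<Rightarrow> ('j \<Rightarrow>\<^sub>0 'k::field))"
  shows "commB c v"
  by (rule commB_keys) (metis commB_main[OF assms] commB_unsorted)


lemma lbr_scaled: "lbr (\<lambda>i j. scal d (c i j)) x y = scal d (lbr c x y)"
  by (simp add: lbr_ext ext_fscal)

lemma lie_scaled:
  assumes "is_lie_bracket c"
  shows "is_lie_bracket (\<lambda>i j. scal d (c i j))"
  unfolding is_lie_bracket_def lbr_scaled lbr_scal2
proof (intro conjI allI)
  fix x show "scal d (lbr c x x) = 0" using assms by (simp add: is_lie_bracket_def)
next
  fix x y z
  have "scal d (scal d (lbr c x (lbr c y z))) + scal d (scal d (lbr c y (lbr c z x))) + scal d (scal d (lbr c z (lbr c x y)))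
      = scal (d * d) (lbr c x (lbr c y z) + lbr c y (lbr c z x) + lbr c z (lbr c x y))"
    by (simp add: scal_add_right)
  also have "\<dots> = 0" using assms by (simp add: is_lie_bracket_def)
  finally show "scal d (scal d (lbr c x (lbr c y z))) + scal d (scal d (lbr c y (lbr c z x))) + scal d (scal d (lbr c z (lbr c x y))) = 0" .
qed

lemma klinear_ext_family:
  assumes "\<And>\<nu>. klinear (F \<nu>)"
  shows "klinear (\<lambda>b. ext (\<lambda>\<nu>. F \<nu> b) y)"
  by (rule klinearI) (simp_all add: klinear_add[OF assms] klinear_scal[OF assms] ext_fadd ext_fscal)

lemma klinear_id: "klinear (\<lambda>x. x)"
  by (rule klinearI) simp_all

lemma klinear_fadd: "klinear F \<Longrightarrow> klinear G \<Longrightarrow> klinear (\<lambda>x. F x + G x)"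
  by (simp add: klinear_def scal_add_right algebra_simps)

lemma klinear_const0: "klinear (\<lambda>x. 0)"
  by (rule klinearI) simp_all

lemma keys_single_sub: "Poly_Mapping.keys (Poly_Mapping.single a (1::'k::field)) = {a}"
  by simp

definition tens :: "('a \<Rightarrow>\<^sub>0 'k::field) \<Rightarrow> ('b \<Rightarrow>\<^sub>0 'k) \<Rightarrow> (('a \<times> 'b) \<Rightarrow>\<^sub>0 'k)" where
  "tens p r = ext (\<lambda>u. ext (\<lambda>w. Poly_Mapping.single (u, w) 1) r) p"

lemma klinear_tens1: "klinear (\<lambda>p. tens p r)"
  unfolding tens_def by (rule klinear_ext)
lemma klinear_tens2: "klinear (\<lambda>r. tens p r)"
  unfolding tens_def by (rule klinear_ext_family) (rule klinear_ext)

lemma tens_ext1: "tens (ext f p) r = ext (\<lambda>u. tens (f u) r) p"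
  unfolding tens_def by (rule ext_ext)
lemma tens_ext2: "tens q (ext f r) = ext (\<lambda>w. tens q (f w)) r"
  by (rule ext_klinear[OF klinear_tens2])
lemma tens_single: "tens (Poly_Mapping.single u a) (Poly_Mapping.single w b) = Poly_Mapping.single (u,w) (a * b)"
  by (simp add: tens_def mult.commute)
lemma tens_single1: "tens (Poly_Mapping.single u 1) r = ext (\<lambda>w. Poly_Mapping.single (u, w) 1) r"
  by (simp add: tens_def)

type_synonym 'j vidx = "'j list + ('j list \<times> 'j list) + 'j list"

definition emb1 :: "('j list \<Rightarrow>\<^sub>0 'k::field) \<Rightarrow> ('j vidx \<Rightarrow>\<^sub>0 'k)" where
  "emb1 a = ext (\<lambda>u. Poly_Mapping.single (Inl u) 1) a"
definition emb2 :: "(('j list \<times> 'j list) \<Rightarrow>\<^sub>0 'k::field) \<Rightarrow> ('j vidx \<Rightarrow>\<^sub>0 'k)" where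
  "emb2 a = ext (\<lambda>u. Poly_Mapping.single (Inr (Inl u)) 1) a"
definition emb3 :: "('j list \<Rightarrow>\<^sub>0 'k::field) \<Rightarrow> ('j vidx \<Rightarrow>\<^sub>0 'k)" where
  "emb3 a = ext (\<lambda>u. Poly_Mapping.single (Inr (Inr u)) 1) a"
definition p1 :: "('j vidx \<Rightarrow>\<^sub>0 'k::field) \<Rightarrow> ('j list \<Rightarrow>\<^sub>0 'k)" where
  "p1 v = ext (\<lambda>x. case x of Inl u \<Rightarrow> Poly_Mapping.single u 1 | Inr _ \<Rightarrow> 0) v"
definition p2 :: "('j vidx \<Rightarrow>\<^sub>0 'k::field) \<Rightarrow> (('j list \<times> 'j list) \<Rightarrow>\<^sub>0 'k)" where
  "p2 v = ext (\<lambda>x. case x of Inr (Inl u) \<Rightarrow> Poly_Mapping.single u 1 | _ \<Rightarrow> 0) v"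
definition p3 :: "('j vidx \<Rightarrow>\<^sub>0 'k::field) \<Rightarrow> ('j list \<Rightarrow>\<^sub>0 'k)" where
  "p3 v = ext (\<lambda>x. case x of Inr (Inr u) \<Rightarrow> Poly_Mapping.single u 1 | _ \<Rightarrow> 0) v"
definition mk where "mk a b c = emb1 a + emb2 b + emb3 c"

lemma klinear_emb1: "klinear emb1" unfolding emb1_def[abs_def] by (rule klinear_ext)
lemma klinear_emb2: "klinear emb2" unfolding emb2_def[abs_def] by (rule klinear_ext)
lemma klinear_emb3: "klinear emb3" unfolding emb3_def[abs_def] by (rule klinear_ext)
lemma klinear_p1: "klinear p1" unfolding p1_def[abs_def] by (rule klinear_ext)
lemma klinear_p2: "klinear p2" unfolding p2_def[abs_def] by (rule klinear_ext)
lemma klinear_p3: "klinear p3" unfolding p3_def[abs_def] by (rule klinear_ext)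

lemma p1_emb1 [simp]: "p1 (emb1 a) = a"
  unfolding emb1_def ext_klinear[OF klinear_p1] by (simp add: p1_def ext_id)
lemma p1_emb2 [simp]: "p1 (emb2 a) = 0"
  unfolding emb2_def ext_klinear[OF klinear_p1] by (simp add: p1_def)
lemma p1_emb3 [simp]: "p1 (emb3 a) = 0"
  unfolding emb3_def ext_klinear[OF klinear_p1] by (simp add: p1_def)
lemma p2_emb1 [simp]: "p2 (emb1 a) = 0"
  unfolding emb1_def ext_klinear[OF klinear_p2] by (simp add: p2_def)
lemma p2_emb2 [simp]: "p2 (emb2 a) = a"
  unfolding emb2_def ext_klinear[OF klinear_p2] by (simp add: p2_def ext_id)
lemma p2_emb3 [simp]: "p2 (emb3 a) = 0"
  unfolding emb3_def ext_klinear[OF klinear_p2] by (simp add: p2_def)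
lemma p3_emb1 [simp]: "p3 (emb1 a) = 0"
  unfolding emb1_def ext_klinear[OF klinear_p3] by (simp add: p3_def)
lemma p3_emb2 [simp]: "p3 (emb2 a) = 0"
  unfolding emb2_def ext_klinear[OF klinear_p3] by (simp add: p3_def)
lemma p3_emb3 [simp]: "p3 (emb3 a) = a"
  unfolding emb3_def ext_klinear[OF klinear_p3] by (simp add: p3_def ext_id)

lemma p1_mk [simp]: "p1 (mk a b c) = a"
  by (simp add: mk_def klinear_add[OF klinear_p1])
lemma p2_mk [simp]: "p2 (mk a b c) = b"
  by (simp add: mk_def klinear_add[OF klinear_p2])
lemma p3_mk [simp]: "p3 (mk a b c) = c"
  by (simp add: mk_def klinear_add[OF klinear_p3])

lemma klinear_mkp: "klinear (\<lambda>v. mk (p1 v) (p2 v) (p3 v))"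
  unfolding mk_def
  by (intro klinear_fadd klinear_comp[OF klinear_emb1 klinear_p1] klinear_comp[OF klinear_emb2 klinear_p2]
      klinear_comp[OF klinear_emb3 klinear_p3])

lemma mk_eta: "mk (p1 v) (p2 v) (p3 v) = v"
proof -
  have "(\<lambda>v. v) v = (\<lambda>v. mk (p1 v) (p2 v) (p3 v)) v"
  proof (rule eq_on_keys[OF klinear_id klinear_mkp])
    fix w :: "'a vidx"
    show "Poly_Mapping.single w 1 = mk (p1 (Poly_Mapping.single w 1)) (p2 (Poly_Mapping.single w 1)) (p3 (Poly_Mapping.single w 1))"
    proof (cases w)
      case (Inl u) then show ?thesis by (simp add: mk_def p1_def p2_def p3_def emb1_def emb2_def emb3_def)
    next
      case (Inr x)
      then show ?thesis
      proof (cases x)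
        case (Inl u) then show ?thesis using Inr by (simp add: mk_def p1_def p2_def p3_def emb1_def emb2_def emb3_def)
      next
        case (Inr u) then show ?thesis using \<open>w = Inr x\<close> by (simp add: mk_def p1_def p2_def p3_def emb1_def emb2_def emb3_def)
      qed
    qed
  qed
  then show ?thesis by simp
qed

lemma V_eqI: "p1 v = p1 w \<Longrightarrow> p2 v = p2 w \<Longrightarrow> p3 v = p3 w \<Longrightarrow> v = w"
  by (metis mk_eta)


definition z0 :: "'j list \<Rightarrow>\<^sub>0 'k::field" where "z0 = Poly_Mapping.single [] 1"

definition T1 where
  "T1 c1 a b = ext (\<lambda>uw. tens (rhot c1 a (Poly_Mapping.single (fst uw) 1)) (Poly_Mapping.single (snd uw) 1)) b"

lemma klinear_T1: "klinear (T1 c1 a)"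
  unfolding T1_def[abs_def] by (rule klinear_ext)

lemma T1_tens: "T1 c1 a (tens p r) = tens (rhot c1 a p) r"
proof -
  have "T1 c1 a (tens p r) = ext (\<lambda>u. T1 c1 a (ext (\<lambda>w. Poly_Mapping.single (u, w) 1) r)) p"
    unfolding tens_def by (rule ext_klinear[OF klinear_T1])
  also have "\<dots> = ext (\<lambda>u. ext (\<lambda>w. T1 c1 a (Poly_Mapping.single (u, w) 1)) r) p"
    by (intro ext_cong ext_klinear[OF klinear_T1])
  also have "\<dots> = ext (\<lambda>u. ext (\<lambda>w. tens (rhot c1 a (Poly_Mapping.single u 1)) (Poly_Mapping.single w 1)) r) p"
    by (intro ext_cong) (simp add: T1_def)
  also have "\<dots> = ext (\<lambda>u. tens (rhot c1 a (Poly_Mapping.single u 1)) r) p"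
    by (intro ext_cong) (simp add: tens_ext2[symmetric] ext_id)
  also have "\<dots> = tens (ext (\<lambda>u. rhot c1 a (Poly_Mapping.single u 1)) p) r"
    by (rule tens_ext1[symmetric])
  also have "ext (\<lambda>u. rhot c1 a (Poly_Mapping.single u 1)) p = rhot c1 a p"
    by (rule klinear_eq_ext[OF klinear_rhot, symmetric])
  finally show ?thesis .
qed

lemma T1_comm:
  fixes c1 :: "'j::linorder \<Rightarrow> 'j \<Rightarrow> ('j \<Rightarrow>\<^sub>0 'k::field)" and b :: "('j list \<times> 'x) \<Rightarrow>\<^sub>0 'k"
  assumes "is_lie_bracket c1"
  shows "T1 c1 i (T1 c1 j b) - T1 c1 j (T1 c1 i b) = ext (\<lambda>\<nu>. T1 c1 \<nu> b) (c1 i j)"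
proof (rule eq_on_keys[where v=b and F="\<lambda>b. T1 c1 i (T1 c1 j b) - T1 c1 j (T1 c1 i b)" and G="\<lambda>b. ext (\<lambda>\<nu>. T1 c1 \<nu> b) (c1 i j)"])
  show "klinear (\<lambda>b. T1 c1 i (T1 c1 j b) - T1 c1 j (T1 c1 i b))"
    by (rule klinear_fdiff; rule klinear_comp[OF klinear_T1 klinear_T1])
  show "klinear (\<lambda>b. ext (\<lambda>\<nu>. T1 c1 \<nu> b) (c1 i j))"
    by (rule klinear_ext_family) (rule klinear_T1)
next
  fix uw :: "'j list \<times> 'x"
  obtain u w where uw: "uw = (u, w)" by (cases uw)
  have s: "T1 c1 a (Poly_Mapping.single (u,w) 1) = tens (rhot c1 a (Poly_Mapping.single u 1)) (Poly_Mapping.single w 1)" for a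
    by (simp add: T1_def)
  have cb: "commB c1 (Poly_Mapping.single u 1)" by (rule commB_all[OF assms])
  have "T1 c1 i (T1 c1 j (Poly_Mapping.single (u,w) 1)) - T1 c1 j (T1 c1 i (Poly_Mapping.single (u,w) 1))
     = tens (rhot c1 i (rhot c1 j (Poly_Mapping.single u 1)) - rhot c1 j (rhot c1 i (Poly_Mapping.single u 1))) (Poly_Mapping.single w 1)"
    by (simp add: s T1_tens klinear_diff[OF klinear_tens1])
  also have "\<dots> = tens (rhoL c1 (c1 i j) (Poly_Mapping.single u 1)) (Poly_Mapping.single w 1)"
    using cb by (simp add: commB_def)
  also have "\<dots> = ext (\<lambda>\<nu>. T1 c1 \<nu> (Poly_Mapping.single (u,w) 1)) (c1 i j)"
    by (simp add: rhoL_def tens_ext1 s)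
  finally show "T1 c1 i (T1 c1 j (Poly_Mapping.single uw 1)) - T1 c1 j (T1 c1 i (Poly_Mapping.single uw 1))
     = ext (\<lambda>\<nu>. T1 c1 \<nu> (Poly_Mapping.single uw 1)) (c1 i j)" using uw by simp
qed

definition Qop where "Qop v = emb3 (p3 v)"
definition Xop where
  "Xop c1 c2 a v = mk (rhot c1 a (p1 v)) (T1 c1 a (p2 v) + tens z0 (rhot c2 a (p3 v))) (rhot c2 a (p3 v))"

lemma p_Qop [simp]: "p1 (Qop v) = 0" "p2 (Qop v) = 0" "p3 (Qop v) = p3 v"
  by (simp_all add: Qop_def)
lemma p_Xop [simp]: "p1 (Xop c1 c2 a v) = rhot c1 a (p1 v)"
   "p2 (Xop c1 c2 a v) = T1 c1 a (p2 v) + tens z0 (rhot c2 a (p3 v))"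
   "p3 (Xop c1 c2 a v) = rhot c2 a (p3 v)"
  by (simp_all add: Xop_def)

lemma klinear_Qop: "klinear Qop"
  unfolding Qop_def[abs_def] by (rule klinear_comp[OF klinear_emb3 klinear_p3])

lemma klinear_Xop: "klinear (Xop c1 c2 a)"
proof (rule klinearI)
  fix p r
  show "Xop c1 c2 a (p + r) = Xop c1 c2 a p + Xop c1 c2 a r"
    by (rule V_eqI) (simp_all add: klinear_add[OF klinear_p1] klinear_add[OF klinear_p2] klinear_add[OF klinear_p3]
        klinear_add[OF klinear_rhot] klinear_add[OF klinear_T1] klinear_add[OF klinear_tens2] algebra_simps)
next
  fix d p
  show "Xop c1 c2 a (scal d p) = scal d (Xop c1 c2 a p)"
    by (rule V_eqI) (simp_all add: klinear_scal[OF klinear_p1] klinear_scal[OF klinear_p2] klinear_scal[OF klinear_p3]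
        klinear_scal[OF klinear_rhot] klinear_scal[OF klinear_T1] klinear_scal[OF klinear_tens2] scal_add_right)
qed

primrec genop where
  "genop c1 c2 Qt = Qop"
| "genop c1 c2 (Xg a) = Xop c1 c2 a"

primrec act where
  "act c1 c2 [] v = v"
| "act c1 c2 (g # w) v = genop c1 c2 g (act c1 c2 w v)"

lemma klinear_genop: "klinear (genop c1 c2 g)"
  by (cases g) (simp_all add: klinear_Qop klinear_Xop)

lemma klinear_act: "klinear (act c1 c2 w)"
proof (induction w)
  case Nil then show ?case by (simp add: klinear_id)
next
  case (Cons g w)
  have "klinear (\<lambda>v. genop c1 c2 g (act c1 c2 w v))" by (rule klinear_comp[OF klinear_genop Cons.IH])
  then show ?case by simp
qed

lemma act_append: "act c1 c2 (u @ w) v = act c1 c2 u (act c1 c2 w v)"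
  by (induction u) simp_all

definition Act where "Act c1 c2 p v = ext (\<lambda>w. act c1 c2 w v) p"

lemma klinear_Act1: "klinear (\<lambda>p. Act c1 c2 p v)"
  unfolding Act_def by (rule klinear_ext)

lemma klinear_Act2: "klinear (Act c1 c2 p)"
  unfolding Act_def[abs_def] by (rule klinear_ext_family) (rule klinear_act)

lemma Act_wd [simp]: "Act c1 c2 (wd w) v = act c1 c2 w v"
  by (simp add: Act_def wd_def)

lemma Act_tmul: "Act c1 c2 (tmul p r) v = Act c1 c2 p (Act c1 c2 r v)"
proof -
  have "Act c1 c2 (tmul p r) v = (\<Sum>u\<in>Poly_Mapping.keys p. \<Sum>w\<in>Poly_Mapping.keys r.
      scal (Poly_Mapping.lookup p u * Poly_Mapping.lookup r w) (act c1 c2 u (act c1 c2 w v)))"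
    unfolding tmul_def Act_def by (simp add: ext_sum act_append)
  also have "\<dots> = Act c1 c2 p (Act c1 c2 r v)"
    unfolding Act_def ext_def
    by (simp add: klinear_sum[OF klinear_act] klinear_scal[OF klinear_act] scal_sum)
  finally show ?thesis .
qed

lemma hatL_ext: "hatL y = ext (\<lambda>j. wd [Xg j]) y"
  by (simp add: hatL_def ext_def)

lemma Act_hatL: "Act c1 c2 (hatL y) v = ext (\<lambda>j. Xop c1 c2 j v) y"
  unfolding hatL_ext ext_klinear[OF klinear_Act1] by simp

primrec act3 where
  "act3 c2 [] g = g"
| "act3 c2 (x # w) g = (case x of Qt \<Rightarrow> act3 c2 w g | Xg a \<Rightarrow> rhot c2 a (act3 c2 w g))"

lemma p3_act: "p3 (act c1 c2 w v) = act3 c2 w (p3 v)"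
  by (induction w) (auto split: gen.splits)

lemma p3_Act: "p3 (Act c1 c2 r v) = ext (\<lambda>w. act3 c2 w (p3 v)) r"
  unfolding Act_def ext_klinear[OF klinear_p3] p3_act ..

lemma rel1: "Act c1 c2 (wd [Qt, Qt] - wd [Qt]) v = 0"
proof -
  have "Act c1 c2 (wd [Qt, Qt] - wd [Qt]) v = Qop (Qop v) - Qop v"
    by (simp add: klinear_diff[OF klinear_Act1])
  also have "\<dots> = 0" by (simp add: Qop_def)
  finally show ?thesis .
qed

lemma rel2: "Act c1 c2 (tmul (wd [Qt]) (tmul r (wd [Qt])) - tmul (wd [Qt]) r) v = 0"
proof -
  have "Act c1 c2 (tmul (wd [Qt]) (tmul r (wd [Qt])) - tmul (wd [Qt]) r) v
      = Qop (Act c1 c2 r (Qop v)) - Qop (Act c1 c2 r v)"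
    by (simp add: klinear_diff[OF klinear_Act1] Act_tmul)
  also have "\<dots> = 0" by (simp add: Qop_def p3_Act)
  finally show ?thesis .
qed

lemma rel3:
  assumes lie: "is_lie_bracket c1" and k: "k \<noteq> 0"
    and c2: "c2 = (\<lambda>i j. scal (inverse k) (c1 i j))"
  shows "Act c1 c2 (hatL (c1 i j) - br6 k i j) v = 0"
proof -
  have lie2: "is_lie_bracket c2" unfolding c2 by (rule lie_scaled[OF lie])
  let ?X = "Xop c1 c2"
  have br: "Act c1 c2 (br6 k i j) v = ?X i (?X j v) - ?X j (?X i v) - ?X i (?X j (Qop v)) + ?X j (?X i (Qop v))
      + scal k (?X i (Qop (?X j v))) - scal k (?X j (Qop (?X i v)))"
    unfolding br6_def
    by (simp add: klinear_diff[OF klinear_Act1] klinear_add[OF klinear_Act1] klinear_scal[OF klinear_Act1])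
  have L: "Act c1 c2 (hatL (c1 i j)) v = ext (\<lambda>\<nu>. ?X \<nu> v) (c1 i j)" by (rule Act_hatL)
  define a where "a = p1 v"
  define b where "b = p2 v"
  define g where "g = p3 v"
  have cb1: "rhot c1 i (rhot c1 j a) - rhot c1 j (rhot c1 i a) = rhoL c1 (c1 i j) a"
    using commB_all[OF lie] by (simp add: commB_def)
  have cb2: "rhot c2 i (rhot c2 j g) - rhot c2 j (rhot c2 i g) = rhoL c2 (c2 i j) g"
    using commB_all[OF lie2] by (simp add: commB_def)
  have c2ij: "c2 i j = scal (inverse k) (c1 i j)" by (simp add: c2)
  have cb2': "scal k (rhot c2 i (rhot c2 j g) - rhot c2 j (rhot c2 i g)) = ext (\<lambda>\<nu>. rhot c2 \<nu> g) (c1 i j)"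
    unfolding cb2 rhoL_def c2ij ext_scal using k by simp
  have T: "T1 c1 i (T1 c1 j b) - T1 c1 j (T1 c1 i b) = ext (\<lambda>\<nu>. T1 c1 \<nu> b) (c1 i j)"
    by (rule T1_comm[OF lie])
  have P1: "p1 (ext (\<lambda>\<nu>. ?X \<nu> v) (c1 i j)) = ext (\<lambda>\<nu>. rhot c1 \<nu> a) (c1 i j)"
    unfolding ext_klinear[OF klinear_p1] a_def by simp
  have P2: "p2 (ext (\<lambda>\<nu>. ?X \<nu> v) (c1 i j)) = ext (\<lambda>\<nu>. T1 c1 \<nu> b) (c1 i j) + tens z0 (ext (\<lambda>\<nu>. rhot c2 \<nu> g) (c1 i j))"
    unfolding ext_klinear[OF klinear_p2] b_def g_def by (simp add: ext_fadd tens_ext2)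
  have P3: "p3 (ext (\<lambda>\<nu>. ?X \<nu> v) (c1 i j)) = ext (\<lambda>\<nu>. rhot c2 \<nu> g) (c1 i j)"
    unfolding ext_klinear[OF klinear_p3] g_def by simp
  have z1: "rhot c1 x 0 = 0" "T1 c1 x 0 = 0" "rhot c2 x 0 = 0" for x
    by (simp_all add: klinear_zero[OF klinear_rhot] klinear_zero[OF klinear_T1])
  have "ext (\<lambda>\<nu>. ?X \<nu> v) (c1 i j) = ?X i (?X j v) - ?X j (?X i v) - ?X i (?X j (Qop v)) + ?X j (?X i (Qop v))
      + scal k (?X i (Qop (?X j v))) - scal k (?X j (Qop (?X i v)))"
  proof (rule V_eqI)
    show "p1 (ext (\<lambda>\<nu>. ?X \<nu> v) (c1 i j)) = p1 (?X i (?X j v) - ?X j (?X i v) - ?X i (?X j (Qop v)) + ?X j (?X i (Qop v))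
      + scal k (?X i (Qop (?X j v))) - scal k (?X j (Qop (?X i v))))"
      unfolding P1 using cb1
      by (simp add: klinear_diff[OF klinear_p1] klinear_add[OF klinear_p1] klinear_scal[OF klinear_p1] z1 rhoL_def a_def)
    show "p3 (ext (\<lambda>\<nu>. ?X \<nu> v) (c1 i j)) = p3 (?X i (?X j v) - ?X j (?X i v) - ?X i (?X j (Qop v)) + ?X j (?X i (Qop v))
      + scal k (?X i (Qop (?X j v))) - scal k (?X j (Qop (?X i v))))"
      unfolding P3 cb2'[symmetric]
      by (simp add: klinear_diff[OF klinear_p3] klinear_add[OF klinear_p3] klinear_scal[OF klinear_p3] g_def scal_diff_right)
    show "p2 (ext (\<lambda>\<nu>. ?X \<nu> v) (c1 i j)) = p2 (?X i (?X j v) - ?X j (?X i v) - ?X i (?X j (Qop v)) + ?X j (?X i (Qop v))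
      + scal k (?X i (Qop (?X j v))) - scal k (?X j (Qop (?X i v))))"
      unfolding P2 cb2'[symmetric] T[symmetric]
      by (simp add: klinear_diff[OF klinear_p2] klinear_add[OF klinear_p2] klinear_scal[OF klinear_p2] b_def g_def
          klinear_add[OF klinear_T1] z1 klinear_diff[OF klinear_tens2] klinear_scal[OF klinear_tens2] scal_diff_right)
  qed
  then show ?thesis
    by (simp add: klinear_diff[OF klinear_Act1] br L)
qed


primrec actR where
  "actR cc [] g = g"
| "actR cc (a # u) g = rhot cc a (actR cc u g)"

primrec T1w where
  "T1w c1 [] b = b"
| "T1w c1 (a # u) b = T1 c1 a (T1w c1 u b)"

lemma klinear_actR: "klinear (actR cc u)"
proof (induction u)
  case Nil then show ?case by (simp add: klinear_id)
next
  case (Cons a u)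
  have "klinear (\<lambda>g. rhot cc a (actR cc u g))" by (rule klinear_comp[OF klinear_rhot Cons.IH])
  then show ?case by simp
qed

lemma klinear_T1w: "klinear (T1w c1 u)"
proof (induction u)
  case Nil then show ?case by (simp add: klinear_id)
next
  case (Cons a u)
  show ?case by (rule klinearI) (simp_all add: klinear_add[OF Cons.IH] klinear_scal[OF Cons.IH]
      klinear_add[OF klinear_T1] klinear_scal[OF klinear_T1])
qed

lemma actR_sorted: "sorted s \<Longrightarrow> actR cc s z0 = Poly_Mapping.single s 1"
proof (induction s)
  case Nil then show ?case by (simp add: z0_def)
next
  case (Cons a s)
  then have "sorted s" by simp
  then show ?case using Cons by (simp add: rhot_single rho_A)
qed

lemma T1w_tens: "T1w c1 u (tens p r) = tens (actR c1 u p) r"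
  by (induction u) (simp_all add: T1_tens)

lemma act_X:
  "act c1 c2 (map Xg u) v = mk (actR c1 u (p1 v))
      (T1w c1 u (p2 v) + (\<Sum>k<length u. tens (actR c1 (take k u) z0) (actR c2 (drop k u) (p3 v))))
      (actR c2 u (p3 v))"
proof (induction u)
  case Nil
  then show ?case by (simp add: mk_eta)
next
  case (Cons a u)
  let ?f = "\<lambda>k. tens (actR c1 (take k (a#u)) z0) (actR c2 (drop k (a#u)) (p3 v))"
  have s: "(\<Sum>k<length (a#u). ?f k) = ?f 0 + (\<Sum>k<length u. ?f (Suc k))"
    by (simp add: sum.lessThan_Suc_shift del: sum.lessThan_Suc)
  have t: "T1 c1 a (\<Sum>k<length u. tens (actR c1 (take k u) z0) (actR c2 (drop k u) (p3 v)))
        = (\<Sum>k<length u. ?f (Suc k))"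
    by (simp add: klinear_sum[OF klinear_T1] T1_tens)
  show ?case
  proof (rule V_eqI)
    show "p2 (act c1 c2 (map Xg (a # u)) v) = p2 (mk (actR c1 (a # u) (p1 v))
      (T1w c1 (a # u) (p2 v) + (\<Sum>k<length (a # u). ?f k)) (actR c2 (a # u) (p3 v)))"
      unfolding s using t by (simp add: Cons klinear_add[OF klinear_T1] add_ac)
  qed (simp_all add: Cons)
qed

definition tau3 :: "'j::linorder list \<Rightarrow> ('j gen list \<Rightarrow>\<^sub>0 'k::field)" where
  "tau3 s = (if sorted s then Poly_Mapping.single (Qt # map Xg s) 1 else 0)"

definition Wb :: "'j::linorder list \<Rightarrow> 'j list \<Rightarrow> ('j gen list \<Rightarrow>\<^sub>0 'k::field)" where
  "Wb u w = (case w of [] \<Rightarrow> 0 | j0 # js \<Rightarrow>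
     if sorted u \<and> sorted w then Poly_Mapping.single (map Xg u @ [Xg j0, Qt] @ map Xg js) 1 else 0)"

function tau2 :: "('j::linorder \<Rightarrow> 'j \<Rightarrow> ('j \<Rightarrow>\<^sub>0 'k::field)) \<Rightarrow> 'j list \<Rightarrow> 'j list \<Rightarrow> ('j gen list \<Rightarrow>\<^sub>0 'k)" where
  "tau2 c2 u w = Wb u w
     - (\<Sum>k<length u. ext (\<lambda>w'. tau2 c2 (take k u) w') (actR c2 (drop k u) (Poly_Mapping.single w 1)))
     - ext tau3 (actR c2 u (Poly_Mapping.single w 1))"
  by auto
termination by (relation "measure (\<lambda>(c2, u, w). length u)") auto

declare tau2.simps[simp del]

lemma tau2_eq: "tau2 c2 u w
     + (\<Sum>k<length u. ext (\<lambda>w'. tau2 c2 (take k u) w') (actR c2 (drop k u) (Poly_Mapping.single w 1)))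
     + ext tau3 (actR c2 u (Poly_Mapping.single w 1)) = Wb u w"
  by (subst (1) tau2.simps) (simp add: algebra_simps)

definition tau1 where
  "tau1 c2 s = (if sorted s then Poly_Mapping.single (map Xg s) 1 else 0)
     - (\<Sum>k<length s. tau2 c2 (take k s) (drop k s)) - tau3 s"

definition tauV where
  "tauV c2 x = (case x of Inl s \<Rightarrow> tau1 c2 s | Inr (Inl uw) \<Rightarrow> tau2 c2 (fst uw) (snd uw) | Inr (Inr s) \<Rightarrow> tau3 s)"

lemma tauV_emb1: "ext (tauV c2) (emb1 a) = ext (tau1 c2) a"
  unfolding emb1_def ext_ext by (simp add: tauV_def)
lemma tauV_emb2: "ext (tauV c2) (emb2 b) = ext (\<lambda>uw. tau2 c2 (fst uw) (snd uw)) b"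
  unfolding emb2_def ext_ext by (simp add: tauV_def)
lemma tauV_emb3: "ext (tauV c2) (emb3 g) = ext tau3 g"
  unfolding emb3_def ext_ext by (simp add: tauV_def)
lemma tauV_mk: "ext (tauV c2) (mk a b g) = ext (tau1 c2) a + ext (\<lambda>uw. tau2 c2 (fst uw) (snd uw)) b + ext tau3 g"
  by (simp add: mk_def ext_add tauV_emb1 tauV_emb2 tauV_emb3)

lemma tau2_tens: "ext (\<lambda>uw. tau2 c2 (fst uw) (snd uw)) (tens (Poly_Mapping.single a 1) r) = ext (\<lambda>b. tau2 c2 a b) r"
  unfolding tens_single1 ext_ext by simp

definition v0 :: "('j vidx \<Rightarrow>\<^sub>0 'k::field)" where "v0 = mk z0 0 z0"

lemma eval_c:
  assumes "sorted s"
  shows "ext (tauV c2) (act c1 c2 (map Xg s) v0) = Poly_Mapping.single (map Xg s) 1"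
proof -
  have ts: "sorted (take k s)" "sorted (drop k s)" for k using assms by (simp_all add: sorted_wrt_take sorted_wrt_drop)
  have "act c1 c2 (map Xg s) v0 = mk (Poly_Mapping.single s 1)
     (\<Sum>k<length s. Poly_Mapping.single (take k s, drop k s) 1) (Poly_Mapping.single s 1)"
    unfolding act_X by (simp add: v0_def actR_sorted[OF assms] actR_sorted[OF ts(1)] actR_sorted[OF ts(2)]
        klinear_zero[OF klinear_T1w] tens_single)
  then show ?thesis
    by (simp add: tauV_mk ext_sum tau1_def assms)
qed

lemma eval_a:
  assumes "sorted s"
  shows "ext (tauV c2) (act c1 c2 (Qt # map Xg s) v0) = Poly_Mapping.single (Qt # map Xg s) 1"
proof -
  have "p3 (act c1 c2 (map Xg s) v0) = Poly_Mapping.single s 1"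
    unfolding act_X by (simp add: v0_def actR_sorted[OF assms])
  then show ?thesis by (simp add: Qop_def tauV_emb3 tau3_def assms)
qed

lemma eval_b:
  assumes u: "sorted u" and w: "sorted (j0 # js)"
  shows "ext (tauV c2) (act c1 c2 (map Xg u @ [Xg j0, Qt] @ map Xg js) v0)
       = Poly_Mapping.single (map Xg u @ [Xg j0, Qt] @ map Xg js) 1"
proof -
  let ?w = "j0 # js"
  let ?zw = "Poly_Mapping.single ?w 1"
  have sjs: "sorted js" using w by simp
  have p3js: "p3 (act c1 c2 (map Xg js) v0) = Poly_Mapping.single js 1"
    unfolding act_X by (simp add: v0_def actR_sorted[OF sjs])
  define y where "y = Xop c1 c2 j0 (Qop (act c1 c2 (map Xg js) v0))"
  have y1: "p1 y = 0" by (simp add: y_def klinear_zero[OF klinear_rhot])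
  have y3: "p3 y = ?zw" by (simp add: y_def p3js rhot_single sjs rho_A[OF w])
  have y2: "p2 y = tens z0 ?zw" by (simp add: y_def p3js rhot_single sjs rho_A[OF w] klinear_zero[OF klinear_T1])
  have tu: "sorted (take k u)" for k using u by (simp add: sorted_wrt_take)
  have "act c1 c2 (map Xg u @ [Xg j0, Qt] @ map Xg js) v0 = act c1 c2 (map Xg u) y"
    by (simp add: act_append y_def)
  also have "\<dots> = mk 0 (tens (Poly_Mapping.single u 1) ?zw
      + (\<Sum>k<length u. tens (Poly_Mapping.single (take k u) 1) (actR c2 (drop k u) ?zw))) (actR c2 u ?zw)"
    unfolding act_X y1 y2 y3
    by (simp add: klinear_zero[OF klinear_actR] T1w_tens actR_sorted[OF u] actR_sorted[OF tu])
  finally have e: "act c1 c2 (map Xg u @ [Xg j0, Qt] @ map Xg js) v0 = \<dots>" .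
  have "ext (tauV c2) (act c1 c2 (map Xg u @ [Xg j0, Qt] @ map Xg js) v0)
      = tau2 c2 u ?w + (\<Sum>k<length u. ext (\<lambda>w'. tau2 c2 (take k u) w') (actR c2 (drop k u) ?zw))
        + ext tau3 (actR c2 u ?zw)"
    unfolding e tauV_mk by (simp add: ext_add ext_sum tau2_tens)
  also have "\<dots> = Wb u ?w" by (rule tau2_eq)
  also have "\<dots> = Poly_Mapping.single (map Xg u @ [Xg j0, Qt] @ map Xg js) 1"
    using u w by (simp add: Wb_def)
  finally show ?thesis .
qed

abbreviation "MM \<equiv> {M. model_monomial M}"

lemma keys_sub_diff: "Poly_Mapping.keys p \<subseteq> S \<Longrightarrow> Poly_Mapping.keys q \<subseteq> S \<Longrightarrow> Poly_Mapping.keys (p - q) \<subseteq> S"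
  by (rule order_trans[OF keys_diff_sub Un_least])
lemma keys_sub_sum: "(\<And>i. i \<in> I \<Longrightarrow> Poly_Mapping.keys (f i) \<subseteq> S) \<Longrightarrow> Poly_Mapping.keys (sum f I) \<subseteq> S"
  by (rule order_trans[OF keys_sum_sub UN_least])
lemma keys_sub_ext: "(\<And>a. a \<in> Poly_Mapping.keys v \<Longrightarrow> Poly_Mapping.keys (f a) \<subseteq> S) \<Longrightarrow> Poly_Mapping.keys (ext f v) \<subseteq> S"
  by (rule order_trans[OF keys_ext UN_least])

lemma mm_a: "sorted s \<Longrightarrow> model_monomial (Qt # map Xg s)"
  unfolding model_monomial_def by (intro disjI1 exI[of _ s]) simp
lemma mm_c: "sorted s \<Longrightarrow> model_monomial (map Xg s)"
  unfolding model_monomial_def by (intro disjI2 exI[of _ s]) simp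
lemma mm_b: "sorted u \<Longrightarrow> sorted (j0 # js) \<Longrightarrow> model_monomial (map Xg u @ [Xg j0, Qt] @ map Xg js)"
  unfolding model_monomial_def by (intro disjI2 disjI1 exI[of _ u] exI[of _ j0] exI[of _ js]) simp

lemma keys_tau3: "Poly_Mapping.keys (tau3 s :: 'j::linorder gen list \<Rightarrow>\<^sub>0 'k::field) \<subseteq> MM"
  by (cases "sorted s") (simp_all add: tau3_def mm_a)

lemma keys_Wb: "Poly_Mapping.keys (Wb u w :: 'j::linorder gen list \<Rightarrow>\<^sub>0 'k::field) \<subseteq> MM"
proof (cases w)
  case (Cons j0 js)
  show ?thesis
  proof (cases "sorted u \<and> sorted w")
    case True
    then have "model_monomial (map Xg u @ [Xg j0, Qt] @ map Xg js)"
      using Cons mm_b by blast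
    then show ?thesis using True Cons by (simp add: Wb_def)
  next
    case False
    then have nf: "\<not> (sorted u \<and> sorted (j0 # js))" using Cons by simp
    show ?thesis by (simp only: Cons Wb_def list.case if_not_P[OF nf]) simp
  qed
qed (simp add: Wb_def)

lemma keys_tau2: "Poly_Mapping.keys (tau2 c2 u w) \<subseteq> MM"
proof (induction c2 u w rule: tau2.induct)
  case (1 c2 u w)
  have S: "Poly_Mapping.keys (\<Sum>k<length u. ext (\<lambda>w'. tau2 c2 (take k u) w') (actR c2 (drop k u) (Poly_Mapping.single w 1))) \<subseteq> MM"
  proof (rule keys_sub_sum)
    fix k assume k: "k \<in> {..<length u}"
    show "Poly_Mapping.keys (ext (\<lambda>w'. tau2 c2 (take k u) w') (actR c2 (drop k u) (Poly_Mapping.single w 1))) \<subseteq> MM"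
    proof (rule keys_sub_ext)
      fix w' assume w': "w' \<in> Poly_Mapping.keys (actR c2 (drop k u) (Poly_Mapping.single w 1))"
      show "Poly_Mapping.keys (tau2 c2 (take k u) w') \<subseteq> MM" using 1 k w' by simp
    qed
  qed
  have E: "Poly_Mapping.keys (ext tau3 (actR c2 u (Poly_Mapping.single w 1))) \<subseteq> MM"
    by (rule keys_sub_ext) (rule keys_tau3)
  show ?case
    by (subst tau2.simps) (intro keys_sub_diff keys_Wb S E)
qed

lemma keys_tau1: "Poly_Mapping.keys (tau1 c2 s) \<subseteq> MM"
proof -
  have A: "Poly_Mapping.keys (if sorted s then Poly_Mapping.single (map Xg s) 1 else 0 :: _ \<Rightarrow>\<^sub>0 'b) \<subseteq> MM"
    by (cases "sorted s") (simp_all add: mm_c)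
  have B: "Poly_Mapping.keys (\<Sum>k<length s. tau2 c2 (take k s) (drop k s)) \<subseteq> MM"
    by (rule keys_sub_sum) (rule keys_tau2)
  show ?thesis unfolding tau1_def
    by (intro keys_sub_diff A B keys_tau3)
qed

lemma keys_tauV: "Poly_Mapping.keys (tauV c2 x) \<subseteq> MM"
proof (cases x)
  case (Inl s) then show ?thesis by (simp add: tauV_def keys_tau1)
next
  case (Inr y)
  then show ?thesis
  proof (cases y)
    case (Inl uw) then show ?thesis using Inr by (simp add: tauV_def keys_tau2)
  next
    case (Inr s) then show ?thesis using \<open>x = Inr y\<close> by (simp add: tauV_def keys_tau3)
  qed
qed


theorem proposition6p2:
  fixes c :: "'j::linorder \<Rightarrow> 'j \<Rightarrow> ('j \<Rightarrow>\<^sub>0 'k::field)"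
    and k :: 'k
  assumes "is_lie_bracket c"
    and "k \<noteq> 0"
  shows "\<exists>\<sigma> :: ('j, 'k) tens \<Rightarrow> ('j gen list \<Rightarrow>\<^sub>0 'k).
           klinear \<sigma>
         \<and> (\<forall>a. Poly_Mapping.keys (\<sigma> a) \<subseteq> {M. model_monomial M})
         \<and> (\<forall>a b. \<sigma> (tmul a (tmul (wd [Qt, Qt] - wd [Qt]) b)) = 0)
         \<and> (\<forall>a b r. \<sigma> (tmul a (tmul (tmul (wd [Qt]) (tmul r (wd [Qt])) - tmul (wd [Qt]) r) b)) = 0)
         \<and> (\<forall>M. model_monomial M \<longrightarrow> \<sigma> (wd M) = Poly_Mapping.single M 1)
         \<and> (\<forall>a b i j. \<sigma> (tmul a (tmul (hatL (c i j) - br6 k i j) b)) = 0)"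
proof -
  define c2 where "c2 = (\<lambda>i j. scal (inverse k) (c i j))"
  define \<sigma> :: "('j, 'k) tens \<Rightarrow> ('j gen list \<Rightarrow>\<^sub>0 'k)" where "\<sigma> = (\<lambda>p. ext (tauV c2) (Act c c2 p v0))"
  have lin: "klinear \<sigma>"
    unfolding \<sigma>_def by (rule klinear_comp[OF klinear_ext klinear_Act1])
  have kz: "\<sigma> (tmul a (tmul r b)) = 0" if "\<And>v. Act c c2 r v = 0" for a r b
    unfolding \<sigma>_def Act_tmul that klinear_zero[OF klinear_Act2] by simp
  have keys: "Poly_Mapping.keys (\<sigma> a) \<subseteq> {M. model_monomial M}" for a
    unfolding \<sigma>_def by (rule keys_sub_ext) (rule keys_tauV)
  have mod: "\<sigma> (wd M) = Poly_Mapping.single M 1" if "model_monomial M" for M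
  proof -
    have e: "\<sigma> (wd M) = ext (tauV c2) (act c c2 M v0)" by (simp add: \<sigma>_def)
    from that show ?thesis unfolding model_monomial_def
    proof (elim disjE exE conjE)
      fix js assume "sorted js" "M = Qt # map Xg js"
      then show ?thesis using e eval_a by simp
    next
      fix us j0 js assume "sorted us" "sorted (j0 # js)" "M = map Xg us @ [Xg j0, Qt] @ map Xg js"
      then show ?thesis using e eval_b by simp
    next
      fix js assume "sorted js" "M = map Xg js"
      then show ?thesis using e eval_c by simp
    qed
  qed
  show ?thesis
  proof (intro exI[of _ \<sigma>] conjI allI impI)
    show "klinear \<sigma>" by (rule lin)
  next
    fix a show "Poly_Mapping.keys (\<sigma> a) \<subseteq> {M. model_monomial M}" by (rule keys)
  next
    fix a b show "\<sigma> (tmul a (tmul (wd [Qt, Qt] - wd [Qt]) b)) = 0" by (rule kz) (rule rel1)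
  next
    fix a b r show "\<sigma> (tmul a (tmul (tmul (wd [Qt]) (tmul r (wd [Qt])) - tmul (wd [Qt]) r) b)) = 0"
      by (rule kz) (rule rel2)
  next
    fix M :: "'j gen list" assume "model_monomial M" then show "\<sigma> (wd M) = Poly_Mapping.single M 1" by (rule mod)
  next
    fix a b i j show "\<sigma> (tmul a (tmul (hatL (c i j) - br6 k i j) b)) = 0"
      by (rule kz) (rule rel3[OF assms(1) assms(2) c2_def])
  qed
qed


end
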